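(* Fractional weak stability does not imply ex-post weak stability: there exist a set $N$ of $n$ agents and a set $O$ of $n$ objects, with weak preferences $\succsim_i$ over $O$ ($i\in N$) and weak priorities $\succsim_o$ over $N$ ($o\in O$), and a random matching $p$ that is fractionally weakly stable but not ex-post weakly stable.
   Context: Preferences $\succsim_i$ and priorities $\succsim_o$ are weak orders (complete and transitive), with strict parts $\succ_i,\succ_o$. A random matching is an $n\times n$ bistochastic matrix $p=[p(i,o)]_{i\in N,o\in O}$ (nonnegative entries, every row and every column summing to $1$); it is deterministic if all entries lie in $\{0,1\}$. A deterministic matching $p$ is weakly stable if there exist no $i,j\in N$, $o,o'\in O$ with $p(i,o')=1$, $p(j,o)=1$, $o\succ_i o'$ and $i\succ_o j$. A random matching is ex-post weakly stable if it can be written as $\sum_{j=1}^k\lambda_jP_j$ with each $P_j$ a weakly stable deterministic matching, $\lambda_j\in(0,1]$, $\sum_j\lambda_j=1$. It is fractionally weakly stable if for every $(i,o)\in N\times O$, $\sum_{o':o'\succsim_i o,\,o'\neq o}p(i,o')\ge\sum_{j:i\succ_o j}p(j,o)$. *)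

theory Defs
  imports Main "HOL-Analysis.Analysis"
begin

text \<open>A weak order on a set A is a complete (total) and transitive relation R on A,
where R x y means x is weakly preferred to y.\<close>

definition weak_order_on :: "'a set \<Rightarrow> ('a \<Rightarrow> 'a \<Rightarrow> bool) \<Rightarrow> bool" where
  "weak_order_on A R \<longleftrightarrow>
     (\<forall>x\<in>A. \<forall>y\<in>A. R x y \<or> R y x) \<and>
     (\<forall>x\<in>A. \<forall>y\<in>A. \<forall>z\<in>A. R x y \<longrightarrow> R y z \<longrightarrow> R x z)"

definition strict :: "('a \<Rightarrow> 'a \<Rightarrow> bool) \<Rightarrow> 'a \<Rightarrow> 'a \<Rightarrow> bool" where
  "strict R x y \<longleftrightarrow> R x y \<and> \<not> R y x"

definition random_matching :: "nat set \<Rightarrow> nat set \<Rightarrow> (nat \<Rightarrow> nat \<Rightarrow> real) \<Rightarrow> bool" where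
  "random_matching N Ob p \<longleftrightarrow>
     (\<forall>i\<in>N. \<forall>b\<in>Ob. p i b \<ge> 0) \<and>
     (\<forall>i\<in>N. (\<Sum>b\<in>Ob. p i b) = 1) \<and>
     (\<forall>b\<in>Ob. (\<Sum>i\<in>N. p i b) = 1)"

definition deterministic_matching :: "nat set \<Rightarrow> nat set \<Rightarrow> (nat \<Rightarrow> nat \<Rightarrow> real) \<Rightarrow> bool" where
  "deterministic_matching N Ob p \<longleftrightarrow>
     random_matching N Ob p \<and> (\<forall>i\<in>N. \<forall>b\<in>Ob. p i b = 0 \<or> p i b = 1)"

definition weakly_stable ::
  "nat set \<Rightarrow> nat set \<Rightarrow> (nat \<Rightarrow> nat \<Rightarrow> nat \<Rightarrow> bool) \<Rightarrow> (nat \<Rightarrow> nat \<Rightarrow> nat \<Rightarrow> bool)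
   \<Rightarrow> (nat \<Rightarrow> nat \<Rightarrow> real) \<Rightarrow> bool" where
  "weakly_stable N Ob pref prio P \<longleftrightarrow>
     deterministic_matching N Ob P \<and>
     \<not> (\<exists>i\<in>N. \<exists>j\<in>N. \<exists>b\<in>Ob. \<exists>b'\<in>Ob.
          P i b' = 1 \<and> P j b = 1 \<and> strict (pref i) b b' \<and> strict (prio b) i j)"

definition ex_post_weakly_stable ::
  "nat set \<Rightarrow> nat set \<Rightarrow> (nat \<Rightarrow> nat \<Rightarrow> nat \<Rightarrow> bool) \<Rightarrow> (nat \<Rightarrow> nat \<Rightarrow> nat \<Rightarrow> bool)
   \<Rightarrow> (nat \<Rightarrow> nat \<Rightarrow> real) \<Rightarrow> bool" where
  "ex_post_weakly_stable N Ob pref prio p \<longleftrightarrow>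
     (\<exists>k::nat. \<exists>lam::nat \<Rightarrow> real. \<exists>P::nat \<Rightarrow> nat \<Rightarrow> nat \<Rightarrow> real.
        k \<ge> 1 \<and>
        (\<forall>j<k. weakly_stable N Ob pref prio (P j)) \<and>
        (\<forall>j<k. 0 < lam j \<and> lam j \<le> 1) \<and>
        (\<Sum>j<k. lam j) = 1 \<and>
        (\<forall>i\<in>N. \<forall>b\<in>Ob. p i b = (\<Sum>j<k. lam j * P j i b)))"

definition fractionally_weakly_stable ::
  "nat set \<Rightarrow> nat set \<Rightarrow> (nat \<Rightarrow> nat \<Rightarrow> nat \<Rightarrow> bool) \<Rightarrow> (nat \<Rightarrow> nat \<Rightarrow> nat \<Rightarrow> bool)
   \<Rightarrow> (nat \<Rightarrow> nat \<Rightarrow> real) \<Rightarrow> bool" where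
  "fractionally_weakly_stable N Ob pref prio p \<longleftrightarrow>
     (\<forall>i\<in>N. \<forall>b\<in>Ob.
        (\<Sum>b'\<in>{b'\<in>Ob. pref i b' b \<and> b' \<noteq> b}. p i b')
          \<ge> (\<Sum>j\<in>{j\<in>N. strict (prio b) i j}. p j b))"

end

theory Submission
  imports Defs
begin

definition rp :: "nat \<Rightarrow> nat \<Rightarrow> nat" where
  "rp i b = [[2,0,2],[2,0,2],[0,1,0::nat]] ! i ! b"
definition rq :: "nat \<Rightarrow> nat \<Rightarrow> nat" where
  "rq b i = [[2,0,2],[0,1,0],[2,0,1::nat]] ! b ! i"
definition pp :: "nat \<Rightarrow> nat \<Rightarrow> real" where
  "pp i b = (if i = b then 0 else 1/2)"

abbreviation "PR \<equiv> (\<lambda>i x y. rp i x \<le> rp i y)"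
abbreviation "QR \<equiv> (\<lambda>b x y. rq b x \<le> rq b y)"

lemma wo: "weak_order_on A (\<lambda>x y. f x \<le> (f y::nat))"
  unfolding weak_order_on_def by auto

lemma filt_ins: "{x \<in> insert a A. Q x} = (if Q a then insert a {x\<in>A. Q x} else {x\<in>A. Q x})"
  by auto
lemma c1: "{x. (x = a \<or> R x) \<and> Q x} = (if Q a then insert a {x. R x \<and> Q x} else {x. R x \<and> Q x})"
  by auto
lemma c2: "{x. x = a \<and> Q x} = (if Q a then {a} else {})"
  by auto

lemma no02:
  assumes ws: "weakly_stable {0,1,2} {0,1,2} PR QR P"
  shows "P 0 2 = 0"
proof -
  from ws have det: "deterministic_matching {0,1,2} {0,1,2} P"
    and nb: "\<not> (\<exists>i\<in>{0,1,2}. \<exists>j\<in>{0,1,2}. \<exists>b\<in>{0,1,2::nat}. \<exists>b'\<in>{0,1,2::nat}.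
          P i b' = 1 \<and> P j b = 1 \<and> strict (PR i) b b' \<and> strict (QR b) i j)"
    unfolding weakly_stable_def by auto
  have d: "\<forall>i\<in>{0,1,2::nat}. \<forall>b\<in>{0,1,2::nat}. P i b = 0 \<or> P i b = 1"
    and r: "\<forall>i\<in>{0,1,2::nat}. (\<Sum>b\<in>{0,1,2}. P i b) = 1"
    and c: "\<forall>b\<in>{0,1,2::nat}. (\<Sum>i\<in>{0,1,2}. P i b) = 1"
    using det unfolding deterministic_matching_def random_matching_def by auto
  show ?thesis
  proof (rule ccontr)
    assume h: "P 0 2 \<noteq> 0"
    then have h1: "P 0 2 = 1" using d by auto
    have r0: "P 0 1 + P 0 2 + P 0 0 = 1" using r by (simp add: algebra_simps)
    have c1: "P 0 1 + P 1 1 + P 2 1 = 1" using c by (simp add: algebra_simps)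
    have d01: "P 0 1 = 0 \<or> P 0 1 = 1" "P 0 0 = 0 \<or> P 0 0 = 1"
      "P 1 1 = 0 \<or> P 1 1 = 1" "P 2 1 = 0 \<or> P 2 1 = 1" using d by auto
    have "P 0 1 = 0" using r0 h1 d01 by auto
    then have "P 1 1 = 1 \<or> P 2 1 = 1" using c1 d01 by auto
    then show False
    proof
      assume "P 1 1 = 1"
      then have "\<exists>i\<in>{0,1,2}. \<exists>j\<in>{0,1,2}. \<exists>b\<in>{0,1,2::nat}. \<exists>b'\<in>{0,1,2::nat}.
          P i b' = 1 \<and> P j b = 1 \<and> strict (PR i) b b' \<and> strict (QR b) i j"
        using h1 by (intro bexI[of _ 0] bexI[of _ 1] bexI[of _ 2]; simp add: strict_def rp_def rq_def)
      with nb show False by blast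
    next
      assume "P 2 1 = 1"
      then have "\<exists>i\<in>{0,1,2}. \<exists>j\<in>{0,1,2}. \<exists>b\<in>{0,1,2::nat}. \<exists>b'\<in>{0,1,2::nat}.
          P i b' = 1 \<and> P j b = 1 \<and> strict (PR i) b b' \<and> strict (QR b) i j"
        using h1 by (intro bexI[of _ 2] bexI[of _ 0] bexI[of _ 2] bexI[of _ 1]; simp add: strict_def rp_def rq_def)
      with nb show False by blast
    qed
  qed
qed

lemma notexpost: "\<not> ex_post_weakly_stable {0,1,2} {0,1,2} PR QR pp"
proof
  assume "ex_post_weakly_stable {0,1,2} {0,1,2} PR QR pp"
  then obtain k :: nat and lam :: "nat \<Rightarrow> real" and P :: "nat \<Rightarrow> nat \<Rightarrow> nat \<Rightarrow> real" where "k \<ge> 1 \<and>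
        (\<forall>j<k. weakly_stable {0,1,2} {0,1,2} PR QR (P j)) \<and>
        (\<forall>j<k. 0 < lam j \<and> lam j \<le> 1) \<and>
        (\<Sum>j<k. lam j) = 1 \<and>
        (\<forall>i\<in>{0,1,2::nat}. \<forall>b\<in>{0,1,2::nat}. pp i b = (\<Sum>j<k. lam j * P j i b))"
    unfolding ex_post_weakly_stable_def by (elim exE) blast
  then have ws: "\<forall>j<k. weakly_stable {0,1,2} {0,1,2} PR QR (P j)"
    and e: "\<forall>i\<in>{0,1,2::nat}. \<forall>b\<in>{0,1,2::nat}. pp i b = (\<Sum>j<k. lam j * P j i b)"
    by blast+
  have "pp 0 2 = (\<Sum>j<k. lam j * P j 0 2)" using e by auto
  also have "\<dots> = 0" using ws no02 by (intro sum.neutral) auto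
  finally show False by (simp add: pp_def)
qed

theorem proposition17:
  shows "\<exists>(N::nat set) (Ob::nat set) (n::nat)
            (pref::nat \<Rightarrow> nat \<Rightarrow> nat \<Rightarrow> bool) (prio::nat \<Rightarrow> nat \<Rightarrow> nat \<Rightarrow> bool)
            (p::nat \<Rightarrow> nat \<Rightarrow> real).
           finite N \<and> finite Ob \<and> card N = n \<and> card Ob = n \<and>
           (\<forall>i\<in>N. weak_order_on Ob (pref i)) \<and>
           (\<forall>b\<in>Ob. weak_order_on N (prio b)) \<and>
           random_matching N Ob p \<and>
           fractionally_weakly_stable N Ob pref prio p \<and>
           \<not> ex_post_weakly_stable N Ob pref prio p"
proof (intro exI conjI)
  show "finite {0,1,2::nat}" by simp
  show "finite {0,1,2::nat}" by simp
  show "card {0,1,2::nat} = 3" by simp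
  show "card {0,1,2::nat} = 3" by simp
  show "\<forall>i\<in>{0,1,2::nat}. weak_order_on {0,1,2::nat} (PR i)" using wo by blast
  show "\<forall>b\<in>{0,1,2::nat}. weak_order_on {0,1,2::nat} (QR b)" using wo by blast
  show "random_matching {0,1,2} {0,1,2} pp"
    unfolding random_matching_def pp_def by auto
  show "fractionally_weakly_stable {0,1,2} {0,1,2} PR QR pp"
    unfolding fractionally_weakly_stable_def Ball_def
    by (simp add: c1 c2 pp_def rp_def rq_def strict_def)
  show "\<not> ex_post_weakly_stable {0,1,2} {0,1,2} PR QR pp" by (rule notexpost)
qed

end
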